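(* Define, for $n\ge 0$, $E_{2n+1}(p,q)=\sum_{\sigma\in\mathfrak{A}_{2n+1}}p^{(2\text{-}13)\sigma}q^{(31\text{-}2)\sigma}$ and $E_{2n}(p,q)=\sum_{\sigma\in\mathfrak{A}_{2n}}p^{(2\text{-}31)\sigma}q^{(31\text{-}2)\sigma}$ (with $E_0(p,q)=1$). Then, as formal power series in $t$, $$\sum_{n=0}^{\infty} E_{2n+1}(p,q) t^{2n+1} =\cfrac{t}{1-\cfrac{[1]_{p,q}[2]_{p,q}t^2}{1-\cfrac{[2]_{p,q}[3]_{p,q}t^2}{1-\cfrac{[3]_{p,q}[4]_{p,q}t^2}{\ddots}}}}, \qquad \sum_{n=0}^{\infty} E_{2n}(p,q) t^{2n} =\cfrac{1}{1-\cfrac{[1]_{p,q}^2t^2}{1-\cfrac{[2]_{p,q}^2t^2}{1-\cfrac{[3]_{p,q}^2t^2}{\ddots}}}},$$ where $[n]_{p,q}=(p^n-q^n)/(p-q)=\sum_{i=0}^{n-1}p^iq^{n-1-i}$.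
   Context: $\mathfrak{A}_m$ is the set of falling alternating permutations $\sigma=\sigma_1\cdots\sigma_m$ of $\{1,\dots,m\}$, i.e. $\sigma_1>\sigma_2<\sigma_3>\sigma_4<\cdots$. For such $\sigma$: $(31\text{-}2)\sigma=\#\{(i,j): i+1<j,\ \sigma_i>\sigma_j>\sigma_{i+1}\}$; $(2\text{-}31)\sigma=\#\{(i,j): j<i-1,\ \sigma_{i-1}>\sigma_j>\sigma_i\}$; $(2\text{-}13)\sigma=\#\{(i,j): j<i-1,\ \sigma_{i-1}<\sigma_j<\sigma_i\}$. *)

theory Defs
  imports Main "HOL-Computational_Algebra.Formal_Power_Series"
begin

text \<open>Permutations of {1..m} are represented as lists (one-line notation);
 positions are 0-based in Isabelle (list index i corresponds to sigma_(i+1)).\<close>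

definition falling_alt :: "nat list \<Rightarrow> bool" where
  "falling_alt s \<longleftrightarrow> (\<forall>i. Suc i < length s \<longrightarrow>
      (if even i then s ! i > s ! Suc i else s ! i < s ! Suc i))"

definition alt_perms :: "nat \<Rightarrow> nat list set" where
  "alt_perms m = {s. distinct s \<and> set s = {1..m} \<and> falling_alt s}"

definition pat_31_2 :: "nat list \<Rightarrow> nat" where
  "pat_31_2 s = card {(i,j). Suc i < j \<and> j < length s \<and> s ! i > s ! j \<and> s ! j > s ! Suc i}"

definition pat_2_31 :: "nat list \<Rightarrow> nat" where
  "pat_2_31 s = card {(i,j). Suc j < i \<and> i < length s \<and> s ! (i - 1) > s ! j \<and> s ! j > s ! i}"

definition pat_2_13 :: "nat list \<Rightarrow> nat" where
  "pat_2_13 s = card {(i,j). Suc j < i \<and> i < length s \<and> s ! (i - 1) < s ! j \<and> s ! j < s ! i}"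

definition E :: "nat \<Rightarrow> 'a::comm_ring_1 \<Rightarrow> 'a \<Rightarrow> 'a" where
  "E m p q = (if odd m
     then (\<Sum>s\<in>alt_perms m. p ^ pat_2_13 s * q ^ pat_31_2 s)
     else (\<Sum>s\<in>alt_perms m. p ^ pat_2_31 s * q ^ pat_31_2 s))"

definition qint :: "nat \<Rightarrow> 'a::comm_ring_1 \<Rightarrow> 'a \<Rightarrow> 'a" where
  "qint n p q = (\<Sum>i<n. p ^ i * q ^ (n - 1 - i))"

fun cf_tail :: "(nat \<Rightarrow> 'a::field) \<Rightarrow> nat \<Rightarrow> nat \<Rightarrow> 'a fps" where
  "cf_tail c 0 j = 1"
| "cf_tail c (Suc k) j = 1 - fps_const (c j) * fps_X ^ 2 * inverse (cf_tail c k (Suc j))"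

text \<open>The k-th convergent of 1/(1 - c_0 t^2/(1 - c_1 t^2/(1 - ...)));
  the infinite continued fraction is the limit of these in the fps metric.\<close>
definition cf_conv :: "(nat \<Rightarrow> 'a::field) \<Rightarrow> nat \<Rightarrow> 'a fps" where
  "cf_conv c k = inverse (cf_tail c k 0)"

end

theory Submission
  imports Defs "HOL-Library.Extended_Nat"
begin

unbundle fps_syntax


function gco :: "(nat \<Rightarrow> 'a::field) \<Rightarrow> nat \<Rightarrow> nat \<Rightarrow> 'a" where
  "gco c j n = (if n = 0 then 1 else if n = 1 then 0
      else c j * (\<Sum>i\<le>n-2. gco c (Suc j) i * gco c j (n - 2 - i)))"
  by auto
termination by (relation "measure (\<lambda>(c,j,n). n)") auto

declare gco.simps[simp del]

definition GG :: "(nat \<Rightarrow> 'a::field) \<Rightarrow> nat \<Rightarrow> 'a fps" where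
  "GG c j = Abs_fps (gco c j)"

lemma GG_eq: "GG c j = 1 + fps_const (c j) * (fps_X^2 * (GG c (Suc j) * GG c j))"
proof (rule fps_ext)
  fix n
  show "GG c j $ n = (1 + fps_const (c j) * (fps_X^2 * (GG c (Suc j) * GG c j))) $ n"
  proof (cases "n < 2")
    case True
    then show ?thesis by (auto simp: GG_def fps_X_power_mult_nth gco.simps[of c j n] less_2_cases_iff)
  next
    case False
    then show ?thesis
      by (simp add: GG_def fps_X_power_mult_nth gco.simps[of c j n])
         (simp add: fps_mult_nth atLeast0AtMost)
  qed
qed

lemma GG_inv: "GG c j * (1 - fps_const (c j) * fps_X^2 * GG c (Suc j)) = 1"
proof -
  have "GG c j * (1 - fps_const (c j) * fps_X^2 * GG c (Suc j))
      = GG c j - fps_const (c j) * (fps_X^2 * (GG c (Suc j) * GG c j))"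
    by (simp add: algebra_simps)
  also have "\<dots> = 1" using GG_eq[of c j] by (metis add_diff_cancel_right')
  finally show ?thesis .
qed

lemma cf_tail_0: "cf_tail c k j $ 0 = 1"
  by (induction k arbitrary: j) auto

lemma mult_vanish:
  fixes a h :: "'a::field fps"
  assumes "\<forall>i<N. h $ i = 0" "n < N"
  shows "(a * h) $ n = 0"
  using assms by (auto simp: fps_mult_nth intro!: sum.neutral)

lemma inv_agree:
  fixes f g :: "'a::field fps"
  assumes "\<forall>i<N. f $ i = g $ i" "f $ 0 \<noteq> 0" "n < N"
  shows "inverse f $ n = inverse g $ n"
proof -
  have g0: "g $ 0 \<noteq> 0" using assms by auto
  have "inverse f - inverse g = inverse f * inverse g * (g - f)"
    using g0 assms(2) by (simp add: algebra_simps inverse_mult_eq_1 inverse_mult_eq_1')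
  moreover have "(inverse f * inverse g * (g - f)) $ n = 0"
    by (rule mult_vanish[of N]) (use assms in auto)
  ultimately show ?thesis by (metis diff_eq_eq fps_sub_nth eq_iff_diff_eq_0)
qed

lemma trunc:
  fixes H :: "nat \<Rightarrow> 'a::field fps"
  assumes H: "\<And>j. H j * (1 - fps_const (c j) * fps_X^2 * H (Suc j)) = 1"
  shows "\<forall>j n. n < 2 * k \<longrightarrow> inverse (cf_tail c k j) $ n = H j $ n"
proof (induction k)
  case 0 then show ?case by simp
next
  case (Suc k)
  show ?case
  proof (intro allI impI)
    fix j n assume n: "n < 2 * Suc k"
    have Hj: "H j = inverse (1 - fps_const (c j) * fps_X^2 * H (Suc j))"
      using fps_inverse_unique[OF H[of j, unfolded mult.commute[of "H j"]]] by simp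
    have ag: "\<forall>i<2 * Suc k. (1 - fps_const (c j) * fps_X^2 * inverse (cf_tail c k (Suc j))) $ i
        = (1 - fps_const (c j) * fps_X^2 * H (Suc j)) $ i"
      using Suc.IH by (auto simp: mult.assoc fps_X_power_mult_nth)
    show "inverse (cf_tail c (Suc k) j) $ n = H j $ n"
      unfolding Hj cf_tail.simps
      by (rule inv_agree[OF ag _ n]) simp
  qed
qed

lemma cf_conv_lim:
  fixes H :: "nat \<Rightarrow> 'a::field fps"
  assumes H: "\<And>j. H j * (1 - fps_const (c j) * fps_X^2 * H (Suc j)) = 1"
  shows "(\<lambda>k. cf_conv c k) \<longlonglongrightarrow> H 0"
    and "(\<lambda>k. fps_X * cf_conv c k) \<longlonglongrightarrow> fps_X * H 0"
proof -
  have tr: "\<forall>j n. n < 2 * k \<longrightarrow> inverse (cf_tail c k j) $ n = H j $ n" for k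
    by (rule trunc) (fact H)
  show "(\<lambda>k. cf_conv c k) \<longlonglongrightarrow> H 0"
  proof (rule tendsto_fpsI)
    fix n show "eventually (\<lambda>k. cf_conv c k $ n = H 0 $ n) sequentially"
      using tr by (intro eventually_sequentiallyI[of "Suc n"]) (auto simp: cf_conv_def)
  qed
  show "(\<lambda>k. fps_X * cf_conv c k) \<longlonglongrightarrow> fps_X * H 0"
  proof (rule tendsto_fpsI)
    fix n show "eventually (\<lambda>k. (fps_X * cf_conv c k) $ n = (fps_X * H 0) $ n) sequentially"
      using tr by (intro eventually_sequentiallyI[of "Suc n"]) (auto simp: cf_conv_def)
  qed
qed

lemma path_gf:
  fixes u d :: "nat \<Rightarrow> 'a::field" and T :: "nat \<Rightarrow> nat \<Rightarrow> 'a"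
  assumes u0: "u 0 = 0"
    and T0: "\<And>k. T 0 k = (if k = 1 then 1 else 0)"
    and TS: "\<And>x k. T (Suc x) k = (if k = 0 then 0 else u (k-1) * T x (k-1)) + d (Suc k) * T x (Suc k)"
  shows "Abs_fps (\<lambda>x. T x 1) = GG (\<lambda>j. u j * d (Suc j)) 1"
    and "Abs_fps (\<lambda>x. T x 0) = fps_X * fps_const (d 1) * GG (\<lambda>j. u j * d (Suc j)) 1"
proof -
  define c where "c = (\<lambda>j. u j * d (Suc j))"
  define P where "P k = (\<Prod>i\<in>{1..<k}. fps_X * fps_const (u i) * GG c (Suc i))" for k
  define F where "F k = (if k = 0 then fps_X * fps_const (d 1) * GG c 1 else GG c 1 * P k)" for k
  define R where "R k = (if k = 0 then 0 else fps_const (u (k-1)) * F (k-1)) + fps_const (d (Suc k)) * F (Suc k)" for k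
  have PS: "P (Suc k) = P k * (fps_X * fps_const (u k) * GG c (Suc k))" if "k \<ge> 1" for k
    using that by (simp add: P_def prod.atLeastLessThan_Suc mult.commute)
  have Frec: "F k = (if k = 1 then 1 else 0) + fps_X * R k" for k
  proof -
    consider "k = 0" | "k = 1" | m where "k = Suc m" "m \<ge> 1" by (cases k) (auto simp: Suc_le_eq)
    then show ?thesis
    proof cases
      case 1 then show ?thesis by (simp add: F_def R_def P_def mult.assoc)
    next
      case 2
      have "F 1 = GG c 1" by (simp add: F_def P_def)
      also have "\<dots> = 1 + fps_const (c 1) * (fps_X^2 * (GG c 2 * GG c 1))"
        using GG_eq[of c 1] by (simp add: numeral_2_eq_2)
      also have "\<dots> = 1 + fps_X * R 1"
        by (simp add: R_def F_def P_def c_def u0 power2_eq_square numeral_2_eq_2 algebra_simps)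
      finally show ?thesis using 2 by simp
    next
      case 3
      define A where "A = F m"
      have e1: "F (Suc m) = A * (fps_X * fps_const (u m) * GG c (Suc m))"
        using 3 by (simp add: A_def F_def PS mult.assoc)
      have e2: "F (Suc (Suc m)) = F (Suc m) * (fps_X * fps_const (u (Suc m)) * GG c (Suc (Suc m)))"
        using 3 by (simp add: F_def PS mult.assoc)
      have "fps_X * R (Suc m) = A * (fps_X * fps_const (u m) *
           (1 + fps_const (c (Suc m)) * (fps_X^2 * (GG c (Suc (Suc m)) * GG c (Suc m)))))"
        unfolding R_def using e1 e2 by (simp add: A_def c_def power2_eq_square algebra_simps)
      also have "\<dots> = A * (fps_X * fps_const (u m) * GG c (Suc m))"
        by (simp only: GG_eq[of c "Suc m", symmetric])
      finally show ?thesis using 3 e1 by simp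
    qed
  qed
  have main: "\<forall>k. F k $ x = T x k" for x
  proof (induction x)
    case 0 show ?case
    proof
      fix k show "F k $ 0 = T 0 k" by (subst Frec) (simp add: T0)
    qed
  next
    case (Suc x)
    show ?case
    proof
      fix k
      have "F k $ Suc x = R k $ x" by (subst Frec) simp
      also have "\<dots> = T (Suc x) k" using Suc.IH by (simp add: R_def TS)
      finally show "F k $ Suc x = T (Suc x) k" .
    qed
  qed
  have "Abs_fps (\<lambda>x. T x 1) = F 1" using main by (intro fps_ext) simp
  then show "Abs_fps (\<lambda>x. T x 1) = GG (\<lambda>j. u j * d (Suc j)) 1"
    by (simp add: F_def P_def c_def)
  have "Abs_fps (\<lambda>x. T x 0) = F 0" using main by (intro fps_ext) simp
  then show "Abs_fps (\<lambda>x. T x 0) = fps_X * fps_const (d 1) * GG (\<lambda>j. u j * d (Suc j)) 1"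
    by (simp add: F_def c_def)
qed

lemma path_parity:
  fixes u d :: "nat \<Rightarrow> 'a::field" and T :: "nat \<Rightarrow> nat \<Rightarrow> 'a"
  assumes T0: "\<And>k. T 0 k = (if k = 1 then 1 else 0)"
    and TS: "\<And>x k. T (Suc x) k = (if k = 0 then 0 else u (k-1) * T x (k-1)) + d (Suc k) * T x (Suc k)"
  shows "even (x + k) \<Longrightarrow> T x k = 0"
proof (induction x arbitrary: k)
  case 0 then show ?case by (auto simp: T0)
next
  case (Suc x) then show ?case by (auto simp: TS)
qed




definition f312 :: "enat \<Rightarrow> enat \<Rightarrow> enat \<Rightarrow> bool" where "f312 a c b \<longleftrightarrow> c < b \<and> b < a"
definition f132 :: "enat \<Rightarrow> enat \<Rightarrow> enat \<Rightarrow> bool" where "f132 a c b \<longleftrightarrow> a < b \<and> b < c"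

definition cpb :: "(enat \<Rightarrow> enat \<Rightarrow> enat \<Rightarrow> bool) \<Rightarrow> enat list \<Rightarrow> enat \<Rightarrow> nat" where
  "cpb f xs b = length (filter (\<lambda>(a,c). f a c b) (zip xs (tl xs)))"

definition PT :: "(enat \<Rightarrow> enat \<Rightarrow> enat \<Rightarrow> bool) \<Rightarrow> enat list \<Rightarrow> nat" where
  "PT f w = (\<Sum>j<length w. cpb f (take j w) (w!j))"

definition patc :: "(enat \<Rightarrow> enat \<Rightarrow> enat \<Rightarrow> bool) \<Rightarrow> enat list \<Rightarrow> nat" where
  "patc f w = card {(i,j). Suc i < j \<and> j < length w \<and> f (w!i) (w!Suc i) (w!j)}"

lemma cpb_Nil[simp]: "cpb f [] b = 0" and cpb_single[simp]: "cpb f [a] b = 0"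
  by (simp_all add: cpb_def)

lemma cpb_Cons2[simp]: "cpb f (a # c # r) b = (if f a c b then 1 else 0) + cpb f (c # r) b"
  by (simp add: cpb_def)

lemma cpb_Cons: "cpb f (a # r) b = (if r \<noteq> [] \<and> f a (hd r) b then 1 else 0) + cpb f r b"
  by (cases r) auto

lemma cpb_mid: "cpb f (L @ y # R) b = cpb f L b + (if L \<noteq> [] \<and> f (last L) y b then 1 else 0)
   + (if R \<noteq> [] \<and> f y (hd R) b then 1 else 0) + cpb f R b"
proof (induction L)
  case Nil then show ?case by (simp add: cpb_Cons)
next
  case (Cons a L)
  then show ?case by (cases L) (auto simp: cpb_Cons)
qed

lemma cpb_snoc: "cpb f (xs @ [y]) b = cpb f xs b + (if xs \<noteq> [] \<and> f (last xs) y b then 1 else 0)"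
  using cpb_mid[of f xs y "[]" b] by simp

lemma cpb_none: "(\<And>a c. \<not> f a c b) \<Longrightarrow> cpb f xs b = 0"
  by (simp add: cpb_def filter_False split_beta)

lemma PT_Nil[simp]: "PT f [] = 0" by (simp add: PT_def)

lemma PT_snoc: "PT f (w @ [b]) = PT f w + cpb f w b"
  unfolding PT_def by (simp add: nth_append)

lemma patc_snoc: "patc f (w @ [b]) = patc f w + cpb f w b"
proof -
  let ?A = "{(i,j). Suc i < j \<and> j < length w \<and> f (w!i) (w!Suc i) (w!j)}"
  let ?B = "(\<lambda>i. (i, length w)) ` {i. Suc i < length w \<and> f (w!i) (w!Suc i) b}"
  have eq: "{(i,j). Suc i < j \<and> j < length (w @ [b]) \<and> f ((w@[b])!i) ((w@[b])!Suc i) ((w@[b])!j)} = ?A \<union> ?B"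
    by (auto simp: nth_append less_Suc_eq)
  have fA: "finite ?A" by (rule finite_subset[of _ "{..<length w} \<times> {..<length w}"]) auto
  have fB: "finite ?B" by (rule finite_imageI, rule finite_subset[of _ "{..<length w}"]) auto
  have "card ?B = card {i. Suc i < length w \<and> f (w!i) (w!Suc i) b}"
    by (rule card_image) (auto simp: inj_on_def)
  also have "\<dots> = cpb f w b"
    unfolding cpb_def length_filter_conv_card
    by (intro arg_cong[where f=card]) (auto simp: nth_tl)
  finally have cB: "card ?B = cpb f w b" .
  have "card (?A \<union> ?B) = card ?A + card ?B"
    by (rule card_Un_disjoint[OF fA fB]) auto
  then show ?thesis unfolding patc_def eq using cB by simp
qed

lemma patc_PT: "patc f w = PT f w"
proof (induction w rule: rev_induct)
  case Nil then show ?case by (simp add: patc_def)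
next
  case (snoc b w) then show ?case by (simp add: patc_snoc PT_snoc)
qed

lemma PT_peak:
  assumes ex: "\<And>a b. b < enat x \<Longrightarrow> f a (enat x) b = f a \<infinity> b \<and> f (enat x) a b = f \<infinity> a b"
    and ninf: "\<And>a c. \<not> f a c \<infinity>"
    and R: "\<forall>b\<in>set R. b < enat x \<or> b = \<infinity>"
  shows "PT f (L @ enat x # R) = PT f (L @ \<infinity> # R) + cpb f L (enat x)"
  using R
proof (induction R rule: rev_induct)
  case Nil
  then show ?case using PT_snoc[of f L] cpb_none[of f \<infinity> L, OF ninf] by simp
next
  case (snoc b R)
  have "cpb f (L @ enat x # R) b = cpb f (L @ \<infinity> # R) b"
  proof (cases "b = \<infinity>")
    case True then show ?thesis by (simp add: cpb_none ninf)
  next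
    case False
    then have "b < enat x" using snoc.prems by auto
    then show ?thesis using ex by (simp add: cpb_mid)
  qed
  then show ?case using snoc by (simp add: PT_snoc[of f "L @ _ # R", simplified])
qed

lemma PT_valley:
  assumes ex: "\<And>b. b < enat x \<Longrightarrow> \<not> f \<infinity> (enat x) b \<and> \<not> f (enat x) \<infinity> b"
    and ninf: "\<And>a c. \<not> f a c \<infinity>"
    and R: "\<forall>b\<in>set R. b < enat x \<or> b = \<infinity>"
  shows "PT f (L @ \<infinity> # enat x # \<infinity> # R) = PT f (L @ \<infinity> # R) + cpb f (L @ [\<infinity>]) (enat x)"
  using R
proof (induction R rule: rev_induct)
  case Nil
  have "PT f (L @ [\<infinity>, enat x, \<infinity>]) = PT f (((L @ [\<infinity>]) @ [enat x]) @ [\<infinity>])" by simp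
  also have "\<dots> = PT f (L @ [\<infinity>]) + cpb f (L @ [\<infinity>]) (enat x)"
    by (simp only: PT_snoc cpb_none[of f \<infinity>, OF ninf])
  finally show ?case by simp
next
  case (snoc b R)
  have "cpb f (L @ \<infinity> # enat x # \<infinity> # R) b = cpb f (L @ \<infinity> # R) b"
  proof (cases "b = \<infinity>")
    case True then show ?thesis by (simp add: cpb_none ninf)
  next
    case False
    then have "b < enat x" using snoc.prems by auto
    then show ?thesis using ex[of b] by (simp add: cpb_mid cpb_Cons)
  qed
  moreover have "PT f (L @ \<infinity> # enat x # \<infinity> # R @ [b]) = PT f (L @ \<infinity> # enat x # \<infinity> # R) + cpb f (L @ \<infinity> # enat x # \<infinity> # R) b"
    using PT_snoc[of f "L @ \<infinity> # enat x # \<infinity> # R" b] by simp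
  ultimately show ?case using snoc by (simp add: PT_snoc[of f "L @ _ # R", simplified])
qed

lemma PT_Cons_inf:
  assumes "\<And>c b. \<not> f \<infinity> c b"
  shows "PT f (\<infinity> # M) = PT f M"
proof (induction M rule: rev_induct)
  case Nil then show ?case by (simp add: PT_def)
next
  case (snoc b M)
  then show ?case using PT_snoc[of f "\<infinity> # M" b] PT_snoc[of f M b] assms
    by (simp add: cpb_Cons)
qed

lemma f312_ex: "b < enat x \<Longrightarrow> f312 a (enat x) b = f312 a \<infinity> b \<and> f312 (enat x) a b = f312 \<infinity> a b"
  by (cases b) (auto simp: f312_def)
lemma f132_ex: "b < enat x \<Longrightarrow> f132 a (enat x) b = f132 a \<infinity> b \<and> f132 (enat x) a b = f132 \<infinity> a b"
  by (cases b) (auto simp: f132_def)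
lemma f312_ninf: "\<not> f312 a c \<infinity>" and f132_ninf: "\<not> f132 a c \<infinity>"
  by (auto simp: f312_def f132_def)
lemma f312_v: "b < enat x \<Longrightarrow> \<not> f312 \<infinity> (enat x) b \<and> \<not> f312 (enat x) \<infinity> b"
  by (auto simp: f312_def)
lemma f132_v: "b < enat x \<Longrightarrow> \<not> f132 \<infinity> (enat x) b \<and> \<not> f132 (enat x) \<infinity> b"
  by (auto simp: f132_def)




fun altr :: "bool \<Rightarrow> enat list \<Rightarrow> bool" where
  "altr d [] = True" | "altr d [a] = True"
| "altr d (a # c # r) = ((if d then c < a else a < c) \<and> altr (\<not> d) (c # r))"

lemma all_nat_split: "(\<forall>i::nat. Q i) \<longleftrightarrow> Q 0 \<and> (\<forall>i. Q (Suc i))"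
  by (metis nat.exhaust)

lemma altr_nth: "altr d w \<longleftrightarrow> (\<forall>i. Suc i < length w \<longrightarrow> (if d = even i then w!Suc i < w!i else w!i < w!Suc i))"
proof (induction w arbitrary: d rule: induct_list012)
  case (3 x y zs)
  show ?case
    apply (subst all_nat_split)
    using "3.IH"(2)[of "\<not> d"] by auto
qed auto

lemma altr_append: "altr d (xs @ y # ys) \<longleftrightarrow> altr d (xs @ [y]) \<and> altr (if even (length xs) then d else \<not> d) (y # ys)"
proof (induction xs arbitrary: d)
  case Nil then show ?case by simp
next
  case (Cons a xs)
  then show ?case by (cases xs) auto
qed

lemma altr_tl: "altr d (a # w) \<Longrightarrow> altr (\<not> d) w"
  by (cases w) auto

lemma altr_snoc: "altr d (xs @ [y]) \<longleftrightarrow> altr d xs \<and> (xs \<noteq> [] \<longrightarrow> (if d = even (length xs - 1) then y < last xs else last xs < y))"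
proof (cases xs rule: rev_cases)
  case Nil then show ?thesis by simp
next
  case (snoc xs0 l)
  have "altr d (xs0 @ l # [y]) \<longleftrightarrow> altr d (xs0 @ [l]) \<and> altr (if even (length xs0) then d else \<not> d) [l, y]"
    by (rule altr_append)
  then show ?thesis using snoc by auto
qed

lemma altr_rev: "altr d (rev w) \<longleftrightarrow> altr (if even (length w) then \<not> d else d) w"
proof (induction w arbitrary: d)
  case Nil then show ?case by simp
next
  case (Cons a w)
  have "altr d (rev (a # w)) \<longleftrightarrow> altr d (rev w @ [a])" by simp
  also have "\<dots> \<longleftrightarrow> altr d (rev w) \<and> (w \<noteq> [] \<longrightarrow> (if d = even (length w - 1) then a < hd w else hd w < a))"
    by (simp add: altr_snoc last_rev)
  also have "\<dots> \<longleftrightarrow> altr (if even (length (a # w)) then \<not> d else d) (a # w)"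
    using Cons.IH by (cases w) auto
  finally show ?case .
qed

lemma altr_inf_even: "altr True w \<Longrightarrow> i < length w \<Longrightarrow> w!i = \<infinity> \<Longrightarrow> even i"
proof (rule ccontr)
  assume a: "altr True w" "i < length w" "w!i = \<infinity>" "odd i"
  then obtain j where j: "i = Suc j" by (cases i) auto
  with a have "even j" by simp
  with a j show False unfolding altr_nth by (metis enat_ord_simps(6))
qed

lemma altr_split_inf: "altr True (L @ \<infinity> # R) \<Longrightarrow> even (length L) \<and> altr True (L @ [\<infinity>]) \<and> altr True (\<infinity> # R)"
proof -
  assume a: "altr True (L @ \<infinity> # R)"
  have e: "even (length L)" using altr_inf_even[OF a, of "length L"] by (simp add: nth_append)
  then show ?thesis using a altr_append[of True L \<infinity> R] by simp
qed

lemma cnt312: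
  "altr True (L @ [\<infinity>]) \<Longrightarrow> \<forall>a\<in>set L. a \<noteq> \<infinity> \<longrightarrow> a < enat x \<Longrightarrow> cpb f312 L (enat x) = count_list L \<infinity>"
proof (induction L rule: induct_list012)
  case 1 then show ?case by simp
next
  case (2 a) then show ?case by simp
next
  case (3 a c r)
  have ca: "c < a" and t: "altr False (c # r @ [\<infinity>])" using "3.prems"(1) by auto
  have r: "altr True (r @ [\<infinity>])" using altr_tl[OF t] by simp
  have cinf: "c \<noteq> \<infinity>" using ca by (cases c) auto
  have cx: "c < enat x" using cinf "3.prems"(2) by auto
  have IH: "cpb f312 r (enat x) = count_list r \<infinity>" using "3.IH"(1)[OF r] "3.prems"(2) by auto
  have h1: "f312 a c (enat x) \<longleftrightarrow> a = \<infinity>"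
    using cx "3.prems"(2) by (cases a) (auto simp: f312_def)
  have h2: "\<not> f312 c d (enat x)" for d using cx by (auto simp: f312_def)
  show ?case using IH h1 h2 cinf by (simp add: cpb_Cons)
qed

lemma cnt132:
  "altr True (M @ [\<infinity>]) \<Longrightarrow> \<forall>a\<in>set M. a \<noteq> \<infinity> \<longrightarrow> a < enat x \<Longrightarrow> cpb f132 M (enat x) = count_list (tl M) \<infinity>"
proof (induction M rule: induct_list012)
  case 1 then show ?case by simp
next
  case (2 a) then show ?case by simp
next
  case (3 a c r)
  have ca: "c < a" and t: "altr False (c # r @ [\<infinity>])" using "3.prems"(1) by auto
  have r: "altr True (r @ [\<infinity>])" using altr_tl[OF t] by simp
  have cinf: "c \<noteq> \<infinity>" using ca by (cases c) auto
  have cx: "c < enat x" using cinf "3.prems"(2) by auto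
  have IH: "cpb f132 r (enat x) = count_list (tl r) \<infinity>" using "3.IH"(1)[OF r] "3.prems"(2) by auto
  have h1: "\<not> f132 a c (enat x)" using cx by (auto simp: f132_def)
  have h2: "r \<noteq> [] \<Longrightarrow> f132 c (hd r) (enat x) \<longleftrightarrow> hd r = \<infinity>"
    using cx "3.prems"(2) hd_in_set[of r] by (cases "hd r") (auto simp: f132_def)
  show ?case using IH h1 h2 cinf by (cases r) (auto simp: cpb_Cons)
qed

fun spl :: "enat list \<Rightarrow> nat \<Rightarrow> enat list \<times> enat list" where
  "spl [] s = ([], [])"
| "spl (a # w) s = (if a = \<infinity> \<and> s = 0 then ([], w)
      else (case spl w (if a = \<infinity> then s - 1 else s) of (L, R) \<Rightarrow> (a # L, R)))"

lemma spl_ok: "s < count_list w \<infinity> \<Longrightarrow> spl w s = (L, R) \<Longrightarrow> w = L @ \<infinity> # R \<and> count_list L \<infinity> = s"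
proof (induction w arbitrary: s L R)
  case Nil then show ?case by simp
next
  case (Cons a w)
  show ?case
  proof (cases "a = \<infinity> \<and> s = 0")
    case True then show ?thesis using Cons.prems by auto
  next
    case False
    obtain L' R' where sp: "spl w (if a = \<infinity> then s - 1 else s) = (L', R')" by fastforce
    have lt: "(if a = \<infinity> then s - 1 else s) < count_list w \<infinity>" using Cons.prems(1) False by auto
    from Cons.IH[OF lt sp] have "w = L' @ \<infinity> # R'" "count_list L' \<infinity> = (if a = \<infinity> then s - 1 else s)" by auto
    moreover have "L = a # L'" "R = R'" using Cons.prems(2) False sp by auto
    ultimately show ?thesis using False by auto
  qed
qed

lemma spl_app: "count_list L \<infinity> = s \<Longrightarrow> spl (L @ \<infinity> # R) s = (L, R)"
  by (induction L arbitrary: s) auto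




definition fin :: "enat list \<Rightarrow> enat list" where "fin w = filter (\<lambda>a. a \<noteq> \<infinity>) w"

definition SS :: "bool \<Rightarrow> nat \<Rightarrow> nat \<Rightarrow> enat list set" where
  "SS e x k = {w. altr True w \<and> odd (length w) \<and> distinct (fin w) \<and> set (fin w) = enat ` {1..x}
      \<and> count_list w \<infinity> = k \<and> (e \<longrightarrow> last w = \<infinity>)}"

definition wt :: "bool \<Rightarrow> 'a::comm_ring_1 \<Rightarrow> 'a \<Rightarrow> enat list \<Rightarrow> 'a" where
  "wt e p q w = q ^ PT f312 w * p ^ PT (if e then f132 else f312) (rev w)"

definition insP :: "nat \<Rightarrow> enat list \<Rightarrow> nat \<Rightarrow> enat list" where
  "insP x w s = (case spl w s of (L, R) \<Rightarrow> L @ enat x # R)"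
definition insV :: "nat \<Rightarrow> enat list \<Rightarrow> nat \<Rightarrow> enat list" where
  "insV x w s = (case spl w s of (L, R) \<Rightarrow> L @ \<infinity> # enat x # \<infinity> # R)"

lemma fin_simps[simp]: "fin [] = []" "fin (a # w) = (if a = \<infinity> then fin w else a # fin w)"
  "fin (xs @ ys) = fin xs @ fin ys"
  by (auto simp: fin_def)

lemma set_fin: "set (fin w) = set w - {\<infinity>}" by (auto simp: fin_def)

lemma len_fin: "length w = length (fin w) + count_list w \<infinity>"
  by (induction w) auto

lemma enat_img_diff: "enat ` {1..Suc x} - {enat (Suc x)} = enat ` {1..x}"
  by auto

lemma small_SS: "w \<in> SS e x k \<Longrightarrow> a \<in> set w \<Longrightarrow> a \<noteq> \<infinity> \<Longrightarrow> a < enat (Suc x)"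
proof -
  assume "w \<in> SS e x k" "a \<in> set w" "a \<noteq> \<infinity>"
  then have "a \<in> enat ` {1..x}" unfolding SS_def set_fin by auto
  then show ?thesis by auto
qed

lemma altr_inf_inf: "\<not> altr d (L @ \<infinity> # \<infinity> # R)"
proof
  assume a: "altr d (L @ \<infinity> # \<infinity> # R)"
  then have "altr (if even (length L) then d else \<not> d) (\<infinity> # \<infinity> # R)" using altr_append by blast
  then show False by (auto split: if_splits)
qed

lemma peak_in:
  assumes w: "w \<in> SS e x (Suc k)" and s: "s < (if e then k else Suc k)"
  shows "insP (Suc x) w s \<in> SS e (Suc x) k \<and>
     wt e p q (insP (Suc x) w s) = wt e p q w * q^s * p^((if e then k else Suc k) - 1 - s)"
proof -
  let ?X = "enat (Suc x)"
  obtain L R where sp: "spl w s = (L, R)" by fastforce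
  have s': "s < count_list w \<infinity>" using w s by (auto simp: SS_def split: if_splits)
  from spl_ok[OF s' sp] have wLR: "w = L @ \<infinity> # R" and cL: "count_list L \<infinity> = s" by auto
  have ins: "insP (Suc x) w s = L @ ?X # R" by (simp add: insP_def sp)
  have alt: "altr True w" and od: "odd (length w)" and dis: "distinct (fin w)"
    and st: "set (fin w) = enat ` {1..x}" and cw: "count_list w \<infinity> = Suc k" and ee: "e \<longrightarrow> last w = \<infinity>"
    using w by (auto simp: SS_def)
  have small: "\<And>a. a \<in> set w \<Longrightarrow> a \<noteq> \<infinity> \<Longrightarrow> a < ?X" using small_SS[OF w] by blast
  from altr_split_inf[OF alt[unfolded wLR]] have eL: "even (length L)" and aL: "altr True (L @ [\<infinity>])"
    and aR: "altr True (\<infinity> # R)" by auto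
  have cR: "count_list R \<infinity> = k - s" and sk: "s \<le> k" using cw cL wLR s by (auto split: if_splits)
  have Xn: "?X \<notin> set (fin w)" using st by auto
  have XL: "?X \<notin> set L" and XR: "?X \<notin> set R" using Xn wLR by (auto simp: set_fin)
  have altL: "altr True (L @ [?X])"
  proof -
    have "altr True L" using aL altr_snoc by blast
    moreover have "L \<noteq> [] \<Longrightarrow> last L < ?X"
    proof -
      assume "L \<noteq> []"
      then have "last L < \<infinity>" using aL eL by (auto simp: altr_snoc)
      moreover have "last L \<in> set w" using \<open>L \<noteq> []\<close> wLR by auto
      ultimately show ?thesis using small by auto
    qed
    ultimately show ?thesis using eL by (auto simp: altr_snoc)
  qed
  have altXR: "altr True (?X # R)"
  proof (cases R)
    case Nil then show ?thesis by simp
  next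
    case (Cons c r)
    with aR have "c < \<infinity>" "altr False (c # r)" by auto
    moreover have "c \<in> set w" using Cons wLR by auto
    ultimately show ?thesis using Cons small by auto
  qed
  have alt': "altr True (L @ ?X # R)" using altr_append[of True L ?X R] eL altL altXR by simp
  have R_nonempty: "e \<Longrightarrow> R \<noteq> []" using cR s by auto
  have inSS: "L @ ?X # R \<in> SS e (Suc x) k"
  proof -
    have "distinct (fin (L @ ?X # R))" using dis Xn wLR by auto
    moreover have "set (fin (L @ ?X # R)) = enat ` {1..Suc x}"
    proof -
      have "set (fin (L @ ?X # R)) = insert ?X (set (fin w))" using wLR by auto
      also have "\<dots> = enat ` {1..Suc x}" using st by (auto simp: atLeastAtMostSuc_conv)
      finally show ?thesis .
    qed
    moreover have "count_list (L @ ?X # R) \<infinity> = k" using cL cR sk by simp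
    moreover have "e \<longrightarrow> last (L @ ?X # R) = \<infinity>" using ee R_nonempty wLR by auto
    ultimately show ?thesis using alt' od wLR by (simp add: SS_def)
  qed
  have smR: "\<forall>b\<in>set R. b < ?X \<or> b = \<infinity>" using small wLR by auto
  have smL: "\<forall>b\<in>set L. b < ?X \<or> b = \<infinity>" using small wLR by auto
  have smL': "\<forall>a\<in>set L. a \<noteq> \<infinity> \<longrightarrow> a < ?X" using smL by auto
  have smR': "\<forall>a\<in>set (rev R). a \<noteq> \<infinity> \<longrightarrow> a < ?X" using smR by auto
  have w1: "PT f312 (L @ ?X # R) = PT f312 w + s"
    using PT_peak[of "Suc x" f312 R L, OF f312_ex f312_ninf smR] cnt312[OF aL smL'] cL wLR by simp
  have arev: "altr True (rev w)" using alt od by (simp add: altr_rev)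
  have rw: "rev w = rev R @ \<infinity> # rev L" using wLR by simp
  from altr_split_inf[OF arev[unfolded rw]] have aRR: "altr True (rev R @ [\<infinity>])" by auto
  have smLr: "\<forall>b\<in>set (rev L). b < ?X \<or> b = \<infinity>" using smL by auto
  have w2: "PT (if e then f132 else f312) (rev (L @ ?X # R)) = PT (if e then f132 else f312) (rev w) + ((if e then k else Suc k) - 1 - s)"
  proof (cases e)
    case False
    have "PT f312 (rev R @ ?X # rev L) = PT f312 (rev R @ \<infinity> # rev L) + cpb f312 (rev R) ?X"
      by (rule PT_peak[of "Suc x" f312 "rev L" "rev R", OF f312_ex f312_ninf smLr])
    also have "cpb f312 (rev R) ?X = count_list R \<infinity>"
      using cnt312[OF aRR smR'] by simp
    finally show ?thesis using False cR rw by simp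
  next
    case True
    have "PT f132 (rev R @ ?X # rev L) = PT f132 (rev R @ \<infinity> # rev L) + cpb f132 (rev R) ?X"
      by (rule PT_peak[of "Suc x" f132 "rev L" "rev R", OF f132_ex f132_ninf smLr])
    also have "cpb f132 (rev R) ?X = count_list (tl (rev R)) \<infinity>"
      using cnt132[OF aRR smR'] by simp
    also have "\<dots> = count_list R \<infinity> - 1"
    proof -
      have "R \<noteq> []" using R_nonempty True by simp
      moreover have "last R = \<infinity>" using ee True wLR \<open>R \<noteq> []\<close> by auto
      ultimately obtain R0 where "R = R0 @ [\<infinity>]" by (metis append_butlast_last_id)
      then show ?thesis by simp
    qed
    finally show ?thesis using True cR rw by simp
  qed
  show ?thesis using inSS w1 w2 ins unfolding wt_def by (simp add: power_add mult_ac)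
qed

lemma valley_in:
  assumes w: "w \<in> SS e x k" and s: "s < k"
  shows "insV (Suc x) w s \<in> SS e (Suc x) (Suc k) \<and>
     wt e p q (insV (Suc x) w s) = wt e p q w * q^s * p^(k - 1 - s)"
proof -
  let ?X = "enat (Suc x)"
  obtain L R where sp: "spl w s = (L, R)" by fastforce
  have s': "s < count_list w \<infinity>" using w s by (auto simp: SS_def)
  from spl_ok[OF s' sp] have wLR: "w = L @ \<infinity> # R" and cL: "count_list L \<infinity> = s" by auto
  have ins: "insV (Suc x) w s = L @ \<infinity> # ?X # \<infinity> # R" by (simp add: insV_def sp)
  have alt: "altr True w" and od: "odd (length w)" and dis: "distinct (fin w)"
    and st: "set (fin w) = enat ` {1..x}" and cw: "count_list w \<infinity> = k" and ee: "e \<longrightarrow> last w = \<infinity>"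
    using w by (auto simp: SS_def)
  have small: "\<And>a. a \<in> set w \<Longrightarrow> a \<noteq> \<infinity> \<Longrightarrow> a < ?X" using small_SS[OF w] by blast
  from altr_split_inf[OF alt[unfolded wLR]] have eL: "even (length L)" and aL: "altr True (L @ [\<infinity>])"
    and aR: "altr True (\<infinity> # R)" by auto
  have cR: "count_list R \<infinity> = k - 1 - s" using cw cL wLR s by auto
  have Xn: "?X \<notin> set (fin w)" using st by auto
  have alt': "altr True (L @ \<infinity> # ?X # \<infinity> # R)"
    using altr_append[of True L \<infinity> "?X # \<infinity> # R"] eL aL aR by simp
  have inSS: "L @ \<infinity> # ?X # \<infinity> # R \<in> SS e (Suc x) (Suc k)"
  proof -
    have "distinct (fin (L @ \<infinity> # ?X # \<infinity> # R))" using dis Xn wLR by auto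
    moreover have "set (fin (L @ \<infinity> # ?X # \<infinity> # R)) = enat ` {1..Suc x}"
    proof -
      have "set (fin (L @ \<infinity> # ?X # \<infinity> # R)) = insert ?X (set (fin w))" using wLR by auto
      also have "\<dots> = enat ` {1..Suc x}" using st by (auto simp: atLeastAtMostSuc_conv)
      finally show ?thesis .
    qed
    moreover have "count_list (L @ \<infinity> # ?X # \<infinity> # R) \<infinity> = Suc k" using cw wLR by simp
    moreover have "e \<longrightarrow> last (L @ \<infinity> # ?X # \<infinity> # R) = \<infinity>" using ee wLR by auto
    moreover have "odd (length (L @ \<infinity> # ?X # \<infinity> # R))" using od wLR by simp
    ultimately show ?thesis using alt' by (simp add: SS_def)
  qed
  have smR: "\<forall>b\<in>set R. b < ?X \<or> b = \<infinity>" using small wLR by auto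
  have smL: "\<forall>b\<in>set L. b < ?X \<or> b = \<infinity>" using small wLR by auto
  have smL': "\<forall>a\<in>set L. a \<noteq> \<infinity> \<longrightarrow> a < ?X" using smL by auto
  have smR': "\<forall>a\<in>set (rev R). a \<noteq> \<infinity> \<longrightarrow> a < ?X" using smR by auto
  have cL2: "cpb f312 (L @ [\<infinity>]) ?X = s"
    using cnt312[OF aL smL'] cL by (simp add: cpb_snoc f312_def)
  have w1: "PT f312 (L @ \<infinity> # ?X # \<infinity> # R) = PT f312 w + s"
    using PT_valley[of "Suc x" f312 R L, OF f312_v f312_ninf smR] cL2 wLR by simp
  have arev: "altr True (rev w)" using alt od by (simp add: altr_rev)
  have rw: "rev w = rev R @ \<infinity> # rev L" using wLR by simp
  from altr_split_inf[OF arev[unfolded rw]] have aRR: "altr True (rev R @ [\<infinity>])" by auto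
  have smLr: "\<forall>b\<in>set (rev L). b < ?X \<or> b = \<infinity>" using smL by auto
  have rw': "rev (L @ \<infinity> # ?X # \<infinity> # R) = rev R @ \<infinity> # ?X # \<infinity> # rev L" by simp
  have w2: "PT (if e then f132 else f312) (rev (L @ \<infinity> # ?X # \<infinity> # R)) = PT (if e then f132 else f312) (rev w) + (k - 1 - s)"
  proof (cases e)
    case False
    have "PT f312 (rev R @ \<infinity> # ?X # \<infinity> # rev L) = PT f312 (rev R @ \<infinity> # rev L) + cpb f312 (rev R @ [\<infinity>]) ?X"
      by (rule PT_valley[of "Suc x" f312 "rev L" "rev R", OF f312_v f312_ninf smLr])
    also have "cpb f312 (rev R @ [\<infinity>]) ?X = count_list R \<infinity>"
      using cnt312[OF aRR smR'] by (simp add: cpb_snoc f312_def)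
    finally show ?thesis using False cR rw rw' by simp
  next
    case True
    have "PT f132 (rev R @ \<infinity> # ?X # \<infinity> # rev L) = PT f132 (rev R @ \<infinity> # rev L) + cpb f132 (rev R @ [\<infinity>]) ?X"
      by (rule PT_valley[of "Suc x" f132 "rev L" "rev R", OF f132_v f132_ninf smLr])
    also have "cpb f132 (rev R @ [\<infinity>]) ?X = count_list R \<infinity>"
    proof (cases "R = []")
      case True then show ?thesis by simp
    next
      case False
      have "last R = \<infinity>" using ee \<open>e\<close> wLR False by auto
      then obtain R0 where R0: "R = R0 @ [\<infinity>]" using False by (metis append_butlast_last_id)
      have hR: "hd R \<noteq> \<infinity>" using aR False by (cases R) auto
      have hR2: "hd R < ?X" using hR small wLR False by (cases R) auto
      have "cpb f132 (rev R @ [\<infinity>]) ?X = cpb f132 (rev R) ?X + 1"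
        using False hR2 by (simp add: cpb_snoc f132_def last_rev)
      also have "cpb f132 (rev R) ?X = count_list (tl (rev R)) \<infinity>" using cnt132[OF aRR smR'] by simp
      also have "\<dots> = count_list R \<infinity> - 1" using R0 by simp
      finally show ?thesis using R0 by simp
    qed
    finally show ?thesis using True cR rw rw' by simp
  qed
  show ?thesis using inSS w1 w2 ins unfolding wt_def by (simp add: power_add mult_ac)
qed




lemma decomp:
  assumes w': "w' \<in> SS e (Suc x) k"
  shows "(\<exists>w s. w \<in> SS e x (Suc k) \<and> s < (if e then k else Suc k) \<and> w' = insP (Suc x) w s)
       \<or> (\<exists>w s. w \<in> SS e x (k - 1) \<and> s < k - 1 \<and> w' = insV (Suc x) w s)"
proof -
  let ?X = "enat (Suc x)"
  have alt: "altr True w'" and od: "odd (length w')" and dis: "distinct (fin w')"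
    and st: "set (fin w') = enat ` {1..Suc x}" and cw: "count_list w' \<infinity> = k" and ee: "e \<longrightarrow> last w' = \<infinity>"
    using w' by (auto simp: SS_def)
  have "?X \<in> set w'" using st by (auto simp: set_fin)
  then obtain A B where AB: "w' = A @ ?X # B" by (meson split_list)
  have XA: "?X \<notin> set A" and XB: "?X \<notin> set B" using dis AB by (auto simp: fin_def)
  have small: "\<And>a. a \<in> set w' \<Longrightarrow> a \<noteq> \<infinity> \<Longrightarrow> a \<noteq> ?X \<Longrightarrow> a < ?X"
  proof -
    fix a assume "a \<in> set w'" "a \<noteq> \<infinity>" "a \<noteq> ?X"
    then have "a \<in> enat ` {1..Suc x}" using st by (auto simp: set_fin)
    then show "a < ?X" using \<open>a \<noteq> ?X\<close> by auto
  qed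
  have stw: "set (fin w) = enat ` {1..x}" if "set (fin w) = set (fin w') - {?X}" for w
    using that st enat_img_diff by simp
  show ?thesis
  proof (cases "even (length A)")
    case True
    define w where "w = A @ \<infinity> # B"
    define s where "s = count_list A \<infinity>"
    have a1: "altr True (A @ [?X])" and a2: "altr True (?X # B)"
      using altr_append[of True A ?X B] alt AB True by auto
    have aA: "altr True (A @ [\<infinity>])"
    proof -
      have "altr True A" using a1 altr_snoc by blast
      moreover have "A \<noteq> [] \<Longrightarrow> last A < \<infinity>"
      proof -
        assume "A \<noteq> []"
        then have "last A < ?X" using a1 True by (auto simp: altr_snoc)
        then show ?thesis by (cases "last A") auto
      qed
      ultimately show ?thesis using True by (auto simp: altr_snoc)
    qed
    have aB: "altr True (\<infinity> # B)"
    proof (cases B)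
      case Nil then show ?thesis by simp
    next
      case (Cons c r)
      with a2 have "c < ?X" "altr False (c # r)" by auto
      then show ?thesis using Cons by (cases c) auto
    qed
    have altw: "altr True w" unfolding w_def using altr_append[of True A \<infinity> B] True aA aB by simp
    have Bne: "e \<Longrightarrow> B \<noteq> [] \<and> last B = \<infinity>" using ee AB by (cases "B = []") auto
    have "w \<in> SS e x (Suc k)"
    proof -
      have "distinct (fin w)" using dis AB by (auto simp: w_def)
      moreover have "set (fin w) = enat ` {1..x}"
        by (rule stw) (use AB XA XB in \<open>auto simp: w_def set_fin\<close>)
      moreover have "count_list w \<infinity> = Suc k" using cw AB by (simp add: w_def)
      moreover have "e \<longrightarrow> last w = \<infinity>" using Bne by (auto simp: w_def)
      moreover have "odd (length w)" using od AB by (simp add: w_def)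
      ultimately show ?thesis using altw by (simp add: SS_def)
    qed
    moreover have "s < (if e then k else Suc k)"
    proof (cases e)
      case True
      then have "count_list B \<infinity> \<ge> 1" using Bne
        by (metis One_nat_def Suc_leI count_list_0_iff last_in_set neq0_conv)
      then show ?thesis using True cw AB by (simp add: s_def)
    next
      case False then show ?thesis using cw AB by (simp add: s_def)
    qed
    moreover have "w' = insP (Suc x) w s" unfolding insP_def w_def s_def using AB by (simp add: spl_app)
    ultimately show ?thesis by blast
  next
    case False
    then obtain A0 a where A: "A = A0 @ [a]" by (metis append_butlast_last_id even_zero list.size(3))
    have "odd (length B)" using od AB False by simp
    then obtain b B0 where B: "B = b # B0" by (cases B) auto
    have "Suc (length A0) < length w'" using AB A by simp
    then have i1: "(if True = even (length A0) then w' ! Suc (length A0) < w' ! length A0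
          else w' ! length A0 < w' ! Suc (length A0))"
      using alt unfolding altr_nth by blast
    have eA0: "even (length A0)" using False A by simp
    have "?X < a" using i1 eA0 AB A by (simp add: nth_append)
    moreover have "a \<in> set w'" "a \<noteq> ?X" using AB A XA by auto
    ultimately have ainf: "a = \<infinity>" using small by fastforce
    have "Suc (Suc (length A0)) < length w'" using AB A B by simp
    then have i2: "(if True = even (Suc (length A0)) then w' ! Suc (Suc (length A0)) < w' ! Suc (length A0)
          else w' ! Suc (length A0) < w' ! Suc (Suc (length A0)))"
      using alt unfolding altr_nth by blast
    have "?X < b" using i2 eA0 AB A B by (simp add: nth_append)
    moreover have "b \<in> set w'" "b \<noteq> ?X" using AB B XB by auto
    ultimately have binf: "b = \<infinity>" using small by fastforce
    define w where "w = A0 @ \<infinity> # B0"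
    define s where "s = count_list A0 \<infinity>"
    have w'e: "w' = A0 @ \<infinity> # (?X # \<infinity> # B0)" using AB A B ainf binf by simp
    have s1: "altr True (A0 @ [\<infinity>])" and s2: "altr True (\<infinity> # ?X # \<infinity> # B0)"
      using altr_append[of True A0 \<infinity> "?X # \<infinity> # B0"] alt w'e eA0 by auto
    have s3: "altr True (\<infinity> # B0)" using altr_tl[OF altr_tl[OF s2]] by simp
    have altw: "altr True w" unfolding w_def using altr_append[of True A0 \<infinity> B0] eA0 s1 s3 by simp
    have "w \<in> SS e x (k - 1)"
    proof -
      have "distinct (fin w)" using dis w'e by (auto simp: w_def)
      moreover have "set (fin w) = enat ` {1..x}"
        by (rule stw) (use w'e XA XB AB A B in \<open>auto simp: w_def set_fin\<close>)
      moreover have "count_list w \<infinity> = k - 1" using cw w'e by (simp add: w_def)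
      moreover have "e \<longrightarrow> last w = \<infinity>" using ee w'e by (auto simp: w_def)
      moreover have "odd (length w)" using od w'e by (simp add: w_def)
      ultimately show ?thesis using altw by (simp add: SS_def)
    qed
    moreover have "s < k - 1" using cw w'e by (simp add: s_def)
    moreover have "w' = insV (Suc x) w s" unfolding insV_def w_def s_def using w'e by (simp add: spl_app)
    ultimately show ?thesis by blast
  qed
qed

lemma insP_inj:
  assumes "m \<le> j"
  shows "inj_on (\<lambda>(w, s). insP (Suc x) w s) (SIGMA w:SS e x j. {..<m})"
proof (rule inj_onI, clarify)
  fix w1 s1 w2 s2
  assume a: "w1 \<in> SS e x j" "s1 < m" "w2 \<in> SS e x j" "s2 < m" "insP (Suc x) w1 s1 = insP (Suc x) w2 s2"
  obtain L1 R1 where sp1: "spl w1 s1 = (L1, R1)" by fastforce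
  obtain L2 R2 where sp2: "spl w2 s2 = (L2, R2)" by fastforce
  have c1: "s1 < count_list w1 \<infinity>" "s2 < count_list w2 \<infinity>" using a assms by (auto simp: SS_def)
  from spl_ok[OF c1(1) sp1] spl_ok[OF c1(2) sp2]
  have e: "w1 = L1 @ \<infinity> # R1" "count_list L1 \<infinity> = s1" "w2 = L2 @ \<infinity> # R2" "count_list L2 \<infinity> = s2" by auto
  have n1: "enat (Suc x) \<notin> set L1" "enat (Suc x) \<notin> set R1"
    using small_SS[OF a(1)] e by fastforce+
  have "L1 @ enat (Suc x) # R1 = L2 @ enat (Suc x) # R2" using a(5) sp1 sp2 by (simp add: insP_def)
  then have "L1 = L2 \<and> R1 = R2" using append_Cons_eq_iff[OF n1] by blast
  then show "w1 = w2 \<and> s1 = s2" using e by simp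
qed

lemma insV_inj:
  assumes "m \<le> j"
  shows "inj_on (\<lambda>(w, s). insV (Suc x) w s) (SIGMA w:SS e x j. {..<m})"
proof (rule inj_onI, clarify)
  fix w1 s1 w2 s2
  assume a: "w1 \<in> SS e x j" "s1 < m" "w2 \<in> SS e x j" "s2 < m" "insV (Suc x) w1 s1 = insV (Suc x) w2 s2"
  obtain L1 R1 where sp1: "spl w1 s1 = (L1, R1)" by fastforce
  obtain L2 R2 where sp2: "spl w2 s2 = (L2, R2)" by fastforce
  have c1: "s1 < count_list w1 \<infinity>" "s2 < count_list w2 \<infinity>" using a assms by (auto simp: SS_def)
  from spl_ok[OF c1(1) sp1] spl_ok[OF c1(2) sp2]
  have e: "w1 = L1 @ \<infinity> # R1" "count_list L1 \<infinity> = s1" "w2 = L2 @ \<infinity> # R2" "count_list L2 \<infinity> = s2" by auto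
  have n1: "enat (Suc x) \<notin> set (L1 @ [\<infinity>])" "enat (Suc x) \<notin> set (\<infinity> # R1)"
    using small_SS[OF a(1)] e by fastforce+
  have "(L1 @ [\<infinity>]) @ enat (Suc x) # (\<infinity> # R1) = (L2 @ [\<infinity>]) @ enat (Suc x) # (\<infinity> # R2)"
    using a(5) sp1 sp2 by (simp add: insV_def)
  then have "L1 @ [\<infinity>] = L2 @ [\<infinity>] \<and> \<infinity> # R1 = \<infinity> # R2" using append_Cons_eq_iff[OF n1] by blast
  then show "w1 = w2 \<and> s1 = s2" using e by simp
qed

lemma PV_disj:
  assumes "w1 \<in> SS e x j1" "s1 < count_list w1 \<infinity>" "w2 \<in> SS e x j2" "s2 < count_list w2 \<infinity>"
  shows "insP (Suc x) w1 s1 \<noteq> insV (Suc x) w2 s2"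
proof
  assume eq: "insP (Suc x) w1 s1 = insV (Suc x) w2 s2"
  obtain L1 R1 where sp1: "spl w1 s1 = (L1, R1)" by fastforce
  obtain L2 R2 where sp2: "spl w2 s2 = (L2, R2)" by fastforce
  from spl_ok[OF assms(2) sp1] spl_ok[OF assms(4) sp2]
  have e: "w1 = L1 @ \<infinity> # R1" "w2 = L2 @ \<infinity> # R2" by auto
  have n1: "enat (Suc x) \<notin> set L1" "enat (Suc x) \<notin> set R1"
    using small_SS[OF assms(1)] e by fastforce+
  have "L1 @ enat (Suc x) # R1 = (L2 @ [\<infinity>]) @ enat (Suc x) # (\<infinity> # R2)"
    using eq sp1 sp2 by (simp add: insP_def insV_def)
  then have "L1 = L2 @ [\<infinity>]" using append_Cons_eq_iff[OF n1] by blast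
  then have "w1 = L2 @ \<infinity> # \<infinity> # R1" using e by simp
  moreover have "altr True w1" using assms(1) by (simp add: SS_def)
  ultimately show False using altr_inf_inf by metis
qed

lemma finite_SS: "finite (SS e x k)"
proof (rule finite_subset)
  show "SS e x k \<subseteq> {w. set w \<subseteq> insert \<infinity> (enat ` {1..x}) \<and> length w \<le> x + k}"
  proof
    fix w assume w: "w \<in> SS e x k"
    then have "set w \<subseteq> insert \<infinity> (enat ` {1..x})" by (auto simp: SS_def set_fin)
    moreover have "length w = x + k"
    proof -
      have "card (enat ` {1..x}) = x" by (simp add: card_image inj_on_def)
      then have "length (fin w) = x" using w distinct_card[of "fin w"] by (auto simp: SS_def)
      then show ?thesis using w len_fin[of w] by (simp add: SS_def)
    qed
    ultimately show "w \<in> {w. set w \<subseteq> insert \<infinity> (enat ` {1..x}) \<and> length w \<le> x + k}" by simp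
  qed
  show "finite {w. set w \<subseteq> insert \<infinity> (enat ` {1..x}) \<and> length w \<le> x + k}"
    by (rule finite_lists_length_le) auto
qed

lemma SS_0: "SS e 0 k = (if k = 1 then {[\<infinity>]} else {})"
proof -
  have "w \<in> SS e 0 k \<longleftrightarrow> k = 1 \<and> w = [\<infinity>]" for w
  proof
    assume w: "w \<in> SS e 0 k"
    then have all: "\<forall>a\<in>set w. a = \<infinity>" by (auto simp: SS_def set_fin)
    have "w = [\<infinity>]"
    proof (cases w)
      case Nil then show ?thesis using w by (simp add: SS_def)
    next
      case (Cons a r)
      show ?thesis
      proof (cases r)
        case Nil then show ?thesis using all Cons by simp
      next
        case (Cons c r') then show ?thesis using all w \<open>w = a # r\<close> by (simp add: SS_def)
      qed
    qed
    then show "k = 1 \<and> w = [\<infinity>]" using w by (simp add: SS_def)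
  next
    assume "k = 1 \<and> w = [\<infinity>]" then show "w \<in> SS e 0 k" by (simp add: SS_def)
  qed
  then show ?thesis by auto
qed

definition TT :: "bool \<Rightarrow> 'a::comm_ring_1 \<Rightarrow> 'a \<Rightarrow> nat \<Rightarrow> nat \<Rightarrow> 'a" where
  "TT e p q x k = (\<Sum>w\<in>SS e x k. wt e p q w)"

lemma TT_0: "TT e p q 0 k = (if k = 1 then 1 else 0)"
  by (simp add: TT_def SS_0 wt_def PT_def)

lemma qsum: "(\<Sum>s<n. q^s * p^(n - 1 - s)) = qint n p q"
proof -
  have "(\<Sum>s<n. q^s * p^(n - 1 - s)) = (\<Sum>i<n. q^(n - Suc i) * p^(n - 1 - (n - Suc i)))"
    by (rule sum.nat_diff_reindex[symmetric])
  also have "\<dots> = (\<Sum>i<n. p^i * q^(n - 1 - i))"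
    by (rule sum.cong) (auto simp: mult.commute)
  finally show ?thesis by (simp add: qint_def)
qed

lemma TT_rec:
  fixes p q :: "'a::comm_ring_1"
  shows "TT e p q (Suc x) k = (if k = 0 then 0 else qint (k-1) p q * TT e p q x (k-1))
      + (if e then qint k p q else qint (Suc k) p q) * TT e p q x (Suc k)"
proof -
  define n where "n = (if e then k else Suc k)"
  define SP where "SP = (SIGMA w:SS e x (Suc k). {..<n})"
  define SV where "SV = (SIGMA w:SS e x (k - 1). {..<k - 1})"
  define P where "P = (\<lambda>(w, s). insP (Suc x) w s) ` SP"
  define V where "V = (\<lambda>(w, s). insV (Suc x) w s) ` SV"
  have nle: "n \<le> Suc k" by (simp add: n_def)
  have eq: "SS e (Suc x) k = P \<union> V"
  proof
    show "SS e (Suc x) k \<subseteq> P \<union> V"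
    proof
      fix w' assume "w' \<in> SS e (Suc x) k"
      from decomp[OF this] show "w' \<in> P \<union> V"
        unfolding P_def V_def SP_def SV_def n_def by (auto intro: image_eqI)
    qed
    show "P \<union> V \<subseteq> SS e (Suc x) k"
    proof
      fix w' assume "w' \<in> P \<union> V"
      then show "w' \<in> SS e (Suc x) k"
      proof
        assume "w' \<in> P"
        then show ?thesis unfolding P_def SP_def n_def using peak_in by fastforce
      next
        assume "w' \<in> V"
        then obtain w s where "w \<in> SS e x (k - 1)" "s < k - 1" "w' = insV (Suc x) w s"
          unfolding V_def SV_def by auto
        moreover have "Suc (k - 1) = k" using \<open>s < k - 1\<close> by arith
        ultimately show ?thesis using conjunct1[OF valley_in[of w e x "k - 1" s]] by simp
      qed
    qed
  qed
  have fSP: "finite SP" "finite SV" unfolding SP_def SV_def using finite_SS by auto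
  have disj: "P \<inter> V = {}"
  proof -
    have "insP (Suc x) w1 s1 \<noteq> insV (Suc x) w2 s2" if "(w1, s1) \<in> SP" "(w2, s2) \<in> SV" for w1 s1 w2 s2
      using that nle by (intro PV_disj[of w1 e x "Suc k" s1 w2 "k - 1" s2]) (auto simp: SP_def SV_def SS_def)
    then show ?thesis unfolding P_def V_def by fastforce
  qed
  have sP: "(\<Sum>w\<in>P. wt e p q w) = (if e then qint k p q else qint (Suc k) p q) * TT e p q x (Suc k)"
  proof -
    have "(\<Sum>w\<in>P. wt e p q w) = (\<Sum>(w,s)\<in>SP. wt e p q (insP (Suc x) w s))"
      unfolding P_def by (subst sum.reindex) (use insP_inj[OF nle] in \<open>auto simp: SP_def split_beta\<close>)
    also have "\<dots> = (\<Sum>(w,s)\<in>SP. wt e p q w * (q^s * p^(n - 1 - s)))"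
    proof (rule sum.cong)
      fix z assume "z \<in> SP"
      then obtain w s where z: "z = (w, s)" "w \<in> SS e x (Suc k)" "s < n" by (auto simp: SP_def)
      have "wt e p q (insP (Suc x) w s) = wt e p q w * q^s * p^(n - 1 - s)"
        using conjunct2[OF peak_in[of w e x k s p q]] z by (simp add: n_def)
      then show "(case z of (w, s) \<Rightarrow> wt e p q (insP (Suc x) w s)) = (case z of (w, s) \<Rightarrow> wt e p q w * (q^s * p^(n - 1 - s)))"
        using z by (simp add: mult.assoc)
    qed simp
    also have "\<dots> = (\<Sum>w\<in>SS e x (Suc k). wt e p q w * (\<Sum>s<n. q^s * p^(n - 1 - s)))"
      unfolding SP_def by (subst sum.Sigma[symmetric]) (auto simp: finite_SS sum_distrib_left)
    also have "\<dots> = (\<Sum>w\<in>SS e x (Suc k). wt e p q w * qint n p q)" by (simp only: qsum)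
    also have "\<dots> = qint n p q * TT e p q x (Suc k)"
      by (simp add: TT_def sum_distrib_left mult.commute)
    finally show ?thesis by (simp add: n_def)
  qed
  have sV: "(\<Sum>w\<in>V. wt e p q w) = (if k = 0 then 0 else qint (k-1) p q * TT e p q x (k-1))"
  proof -
    have "(\<Sum>w\<in>V. wt e p q w) = (\<Sum>(w,s)\<in>SV. wt e p q (insV (Suc x) w s))"
      unfolding V_def by (subst sum.reindex) (use insV_inj[of "k - 1" "k - 1"] in \<open>auto simp: SV_def split_beta\<close>)
    also have "\<dots> = (\<Sum>(w,s)\<in>SV. wt e p q w * (q^s * p^(k - 1 - 1 - s)))"
    proof (rule sum.cong)
      fix z assume "z \<in> SV"
      then obtain w s where z: "z = (w, s)" "w \<in> SS e x (k - 1)" "s < k - 1" by (auto simp: SV_def)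
      have "wt e p q (insV (Suc x) w s) = wt e p q w * q^s * p^(k - 1 - 1 - s)"
        using conjunct2[OF valley_in[of w e x "k - 1" s p q]] z by simp
      then show "(case z of (w, s) \<Rightarrow> wt e p q (insV (Suc x) w s)) = (case z of (w, s) \<Rightarrow> wt e p q w * (q^s * p^(k - 1 - 1 - s)))"
        using z by (simp add: mult.assoc)
    qed simp
    also have "\<dots> = (\<Sum>w\<in>SS e x (k - 1). wt e p q w * (\<Sum>s<k - 1. q^s * p^(k - 1 - 1 - s)))"
      unfolding SV_def by (subst sum.Sigma[symmetric]) (auto simp: finite_SS sum_distrib_left)
    also have "\<dots> = (\<Sum>w\<in>SS e x (k - 1). wt e p q w * qint (k - 1) p q)" by (simp only: qsum)
    also have "\<dots> = qint (k - 1) p q * TT e p q x (k - 1)"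
      by (simp add: TT_def sum_distrib_left mult.commute)
    finally show ?thesis by (simp add: qint_def)
  qed
  have "TT e p q (Suc x) k = (\<Sum>w\<in>P. wt e p q w) + (\<Sum>w\<in>V. wt e p q w)"
    unfolding TT_def eq using fSP disj unfolding P_def V_def by (intro sum.union_disjoint) auto
  then show ?thesis using sP sV by simp
qed




lemma falling_altr: "falling_alt s \<longleftrightarrow> altr True (map enat s)"
  unfolding falling_alt_def altr_nth by auto

lemma fin_map: "fin (map enat s) = map enat s"
  by (induction s) auto

lemma inj_enat': "inj enat" by (rule injI) simp

lemma map_enat_inj: "inj_on (map enat) A"
  by (rule inj_onI) (simp add: inj_map_eq_map[OF inj_enat'])

lemma patc_rev: "patc f (rev w) = card {(i,j). Suc j < i \<and> i < length w \<and> f (w!i) (w!(i-1)) (w!j)}"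
proof -
  let ?n = "length w"
  let ?C = "{(a,b). Suc a < b \<and> b < length (rev w) \<and> f (rev w!a) (rev w!Suc a) (rev w!b)}"
  let ?D = "{(i,j). Suc j < i \<and> i < ?n \<and> f (w!i) (w!(i-1)) (w!j)}"
  let ?g = "\<lambda>(a,b). (?n - 1 - a, ?n - 1 - b)"
  have inj: "inj_on ?g ?C" by (rule inj_onI) auto
  have img: "?g ` ?C = ?D"
  proof
    show "?g ` ?C \<subseteq> ?D"
    proof clarify
      fix a b assume ab: "Suc a < b" "b < length (rev w)" "f (rev w!a) (rev w!Suc a) (rev w!b)"
      have e1: "rev w ! a = w ! (?n - 1 - a)" "rev w ! Suc a = w ! (?n - 1 - a - 1)" "rev w ! b = w ! (?n - 1 - b)"
        using ab by (auto simp: rev_nth)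
      show "Suc (?n - 1 - b) < ?n - 1 - a \<and> ?n - 1 - a < ?n \<and> f (w!(?n - 1 - a)) (w!(?n - 1 - a - 1)) (w!(?n - 1 - b))"
        using ab e1 by auto
    qed
    show "?D \<subseteq> ?g ` ?C"
    proof clarify
      fix i j assume ij: "Suc j < i" "i < ?n" "f (w!i) (w!(i-1)) (w!j)"
      have "(?n - 1 - i, ?n - 1 - j) \<in> ?C"
      proof -
        have e1: "rev w ! (?n - 1 - i) = w ! i" "rev w ! Suc (?n - 1 - i) = w ! (i - 1)" "rev w ! (?n - 1 - j) = w ! j"
          using ij by (auto simp: rev_nth Suc_diff_Suc)
        then show ?thesis using ij by auto
      qed
      moreover have "(i, j) = ?g (?n - 1 - i, ?n - 1 - j)" using ij by auto
      ultimately show "(i, j) \<in> ?g ` ?C" by blast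
    qed
  qed
  show ?thesis unfolding patc_def using card_image[OF inj] img by simp
qed

lemma pat312_PT: "pat_31_2 s = PT f312 (map enat s)"
  unfolding patc_PT[symmetric] patc_def pat_31_2_def f312_def
  by (intro arg_cong[where f=card]) auto

lemma pat213_PT: "pat_2_13 s = PT f312 (rev (map enat s))"
  unfolding patc_PT[symmetric] patc_rev pat_2_13_def f312_def
  by (intro arg_cong[where f=card]) auto

lemma pat231_PT: "pat_2_31 s = PT f132 (rev (map enat s))"
  unfolding patc_PT[symmetric] patc_rev pat_2_31_def f132_def
  by (intro arg_cong[where f=card]) auto

lemma alt_perms_len: "s \<in> alt_perms m \<Longrightarrow> length s = m"
  unfolding alt_perms_def using distinct_card[of s] by auto

lemma map_enat_props:
  assumes "distinct (map enat s)" "set (map enat s) = enat ` {1..m}"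
  shows "distinct s" "set s = {1..m}"
  using assms by (auto simp: distinct_map inj_image_eq_iff[OF inj_enat'])

lemma SS_odd: "odd m \<Longrightarrow> SS False m 0 = map enat ` alt_perms m"
proof
  assume m: "odd m"
  show "SS False m 0 \<subseteq> map enat ` alt_perms m"
  proof
    fix w assume w: "w \<in> SS False m 0"
    then have "\<infinity> \<notin> set w" by (simp add: SS_def count_list_0_iff)
    then have "\<forall>a\<in>set w. \<exists>n. a = enat n" by (metis not_infinity_eq)
    then obtain s where ws: "w = map enat s" using ex_map_conv by metis
    have fw: "fin (map enat s) = map enat s" by (rule fin_map)
    have "s \<in> alt_perms m"
      using w map_enat_props[of s m] fw ws by (auto simp: SS_def alt_perms_def falling_altr)
    then show "w \<in> map enat ` alt_perms m" using ws by blast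
  qed
  show "map enat ` alt_perms m \<subseteq> SS False m 0"
  proof
    fix w assume "w \<in> map enat ` alt_perms m"
    then obtain s where s: "s \<in> alt_perms m" and ws: "w = map enat s" by blast
    have fw: "fin (map enat s) = map enat s" by (rule fin_map)
    have "count_list w \<infinity> = 0" using ws by (auto simp: count_list_0_iff)
    then show "w \<in> SS False m 0" using s ws fw m alt_perms_len[OF s]
      by (auto simp: SS_def alt_perms_def falling_altr distinct_map inj_on_def)
  qed
qed

lemma SS_even: "even m \<Longrightarrow> SS True m 1 = (\<lambda>s. map enat s @ [\<infinity>]) ` alt_perms m"
proof
  assume m: "even m"
  show "SS True m 1 \<subseteq> (\<lambda>s. map enat s @ [\<infinity>]) ` alt_perms m"
  proof
    fix w assume w: "w \<in> SS True m 1"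
    then have "w \<noteq> []" by (auto simp: SS_def)
    moreover have "last w = \<infinity>" using w by (simp add: SS_def)
    ultimately obtain v where wb: "w = v @ [\<infinity>]" by (metis append_butlast_last_id)
    have "count_list (v @ [\<infinity>]) \<infinity> = 1" using w wb by (simp add: SS_def)
    then have "count_list v \<infinity> = 0" by simp
    then have "\<infinity> \<notin> set v" by (simp add: count_list_0_iff)
    then have "\<forall>a\<in>set v. \<exists>n. a = enat n" by (metis not_infinity_eq)
    then obtain s where ws: "v = map enat s" using ex_map_conv by metis
    have fw: "fin w = map enat s" using \<open>\<infinity> \<notin> set v\<close> ws wb
      by (auto simp: fin_def filter_id_conv)
    have aw: "altr True (map enat s)" using w wb ws altr_snoc[of True "map enat s" \<infinity>] by (simp add: SS_def)
    have "s \<in> alt_perms m"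
      using w map_enat_props[of s m] fw aw by (auto simp: SS_def alt_perms_def falling_altr)
    then show "w \<in> (\<lambda>s. map enat s @ [\<infinity>]) ` alt_perms m" using ws wb by (metis image_eqI)
  qed
  show "(\<lambda>s. map enat s @ [\<infinity>]) ` alt_perms m \<subseteq> SS True m 1"
  proof
    fix w assume "w \<in> (\<lambda>s. map enat s @ [\<infinity>]) ` alt_perms m"
    then obtain s where s: "s \<in> alt_perms m" and ws: "w = map enat s @ [\<infinity>]" by blast
    have ls: "length s = m" by (rule alt_perms_len[OF s])
    have fw: "fin w = map enat s" using ws by (auto simp: fin_def filter_id_conv)
    have "count_list (map enat s) \<infinity> = 0" by (auto simp: count_list_0_iff)
    then have cw: "count_list w \<infinity> = 1" using ws by simp
    have aw: "altr True w"
    proof -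
      have "altr True (map enat s)" using s by (simp add: alt_perms_def falling_altr)
      moreover have "s \<noteq> [] \<Longrightarrow> last (map enat s) < \<infinity>" by (simp add: last_map)
      ultimately show ?thesis using ws ls m by (auto simp: altr_snoc)
    qed
    show "w \<in> SS True m 1" using s ws fw cw aw m ls
      by (auto simp: SS_def alt_perms_def distinct_map inj_on_def)
  qed
qed

lemma E_odd: "odd m \<Longrightarrow> E m p q = TT False p q m 0"
proof -
  assume m: "odd m"
  have "TT False p q m 0 = (\<Sum>s\<in>alt_perms m. wt False p q (map enat s))"
    unfolding TT_def SS_odd[OF m] by (rule sum.reindex[OF map_enat_inj, unfolded comp_def])
  also have "\<dots> = (\<Sum>s\<in>alt_perms m. p ^ pat_2_13 s * q ^ pat_31_2 s)"
    by (rule sum.cong) (auto simp: wt_def pat312_PT pat213_PT mult.commute)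
  finally show ?thesis using m by (simp add: E_def)
qed

lemma E_even: "even m \<Longrightarrow> E m p q = TT True p q m 1"
proof -
  assume m: "even m"
  have inj: "inj_on (\<lambda>s. map enat s @ [\<infinity>]) (alt_perms m)"
    by (rule inj_onI) (simp add: inj_map_eq_map[OF inj_enat'])
  have "TT True p q m 1 = (\<Sum>s\<in>alt_perms m. wt True p q (map enat s @ [\<infinity>]))"
    unfolding TT_def SS_even[OF m] by (rule sum.reindex[OF inj, unfolded comp_def])
  also have "\<dots> = (\<Sum>s\<in>alt_perms m. p ^ pat_2_31 s * q ^ pat_31_2 s)"
  proof (rule sum.cong)
    fix s
    have "PT f312 (map enat s @ [\<infinity>]) = PT f312 (map enat s)"
      using PT_snoc[of f312 "map enat s" \<infinity>] cpb_none[of f312 \<infinity>] f312_ninf by simp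
    moreover have "PT f132 (\<infinity> # rev (map enat s)) = PT f132 (rev (map enat s))"
      by (rule PT_Cons_inf) (simp add: f132_def)
    ultimately show "wt True p q (map enat s @ [\<infinity>]) = p ^ pat_2_31 s * q ^ pat_31_2 s"
      by (simp add: wt_def pat312_PT pat231_PT mult.commute)
  qed simp
  finally show ?thesis using m by (simp add: E_def)
qed

theorem theorem2p1:
  fixes p q :: "'a::field"
  shows "((\<lambda>k. fps_X * cf_conv (\<lambda>i. qint (i+1) p q * qint (i+2) p q) k)
           \<longlonglongrightarrow> Abs_fps (\<lambda>m. if odd m then E m p q else 0))
       \<and> ((\<lambda>k. cf_conv (\<lambda>i. (qint (i+1) p q)\<^sup>2) k)
           \<longlonglongrightarrow> Abs_fps (\<lambda>m. if even m then E m p q else 0))"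
proof
  have q0: "qint 0 p q = 0" by (simp add: qint_def)
  have q1: "qint (Suc 0) p q = 1" by (simp add: qint_def)
  show "(\<lambda>k. fps_X * cf_conv (\<lambda>i. qint (i+1) p q * qint (i+2) p q) k)
           \<longlonglongrightarrow> Abs_fps (\<lambda>m. if odd m then E m p q else 0)"
  proof -
    define u where "u = (\<lambda>j. qint j p q)"
    define c where "c = (\<lambda>j. u j * u (Suc j))"
    have T0: "\<And>k. TT False p q 0 k = (if k = 1 then 1 else 0)" by (rule TT_0)
    have TS: "\<And>x k. TT False p q (Suc x) k = (if k = 0 then 0 else u (k-1) * TT False p q x (k-1)) + u (Suc k) * TT False p q x (Suc k)"
      by (simp add: TT_rec u_def)
    have g: "Abs_fps (\<lambda>x. TT False p q x 0) = fps_X * fps_const (u 1) * GG c 1"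
      using path_gf(2)[where u=u and d=u and T="TT False p q", OF _ T0 TS] by (simp add: u_def q0 c_def)
    have tgt: "Abs_fps (\<lambda>m. if odd m then E m p q else 0) = Abs_fps (\<lambda>x. TT False p q x 0)"
    proof (rule fps_ext)
      fix m show "Abs_fps (\<lambda>m. if odd m then E m p q else 0) $ m = Abs_fps (\<lambda>x. TT False p q x 0) $ m"
        using E_odd[of m p q] path_parity[where u=u and d=u and T="TT False p q", OF T0 TS, of m 0] by auto
    qed
    have H: "\<And>j. GG c (Suc j) * (1 - fps_const (qint (j+1) p q * qint (j+2) p q) * fps_X^2 * GG c (Suc (Suc j))) = 1"
      using GG_inv[of c] by (simp add: c_def u_def numeral_2_eq_2)
    have "(\<lambda>k. fps_X * cf_conv (\<lambda>i. qint (i+1) p q * qint (i+2) p q) k) \<longlonglongrightarrow> fps_X * GG c (Suc 0)"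
      using cf_conv_lim(2)[of "\<lambda>j. GG c (Suc j)", OF H] by simp
    then show ?thesis using tgt g q1 by (simp add: u_def)
  qed
  show "(\<lambda>k. cf_conv (\<lambda>i. (qint (i+1) p q)\<^sup>2) k) \<longlonglongrightarrow> Abs_fps (\<lambda>m. if even m then E m p q else 0)"
  proof -
    define u where "u = (\<lambda>j. qint j p q)"
    define d where "d = (\<lambda>j. qint (j - 1) p q)"
    define c where "c = (\<lambda>j. u j * d (Suc j))"
    have T0: "\<And>k. TT True p q 0 k = (if k = 1 then 1 else 0)" by (rule TT_0)
    have TS: "\<And>x k. TT True p q (Suc x) k = (if k = 0 then 0 else u (k-1) * TT True p q x (k-1)) + d (Suc k) * TT True p q x (Suc k)"
      by (simp add: TT_rec u_def d_def)
    have g: "Abs_fps (\<lambda>x. TT True p q x 1) = GG c 1"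
      using path_gf(1)[where u=u and d=d and T="TT True p q", OF _ T0 TS] by (simp add: u_def q0 c_def)
    have tgt: "Abs_fps (\<lambda>m. if even m then E m p q else 0) = Abs_fps (\<lambda>x. TT True p q x 1)"
    proof (rule fps_ext)
      fix m show "Abs_fps (\<lambda>m. if even m then E m p q else 0) $ m = Abs_fps (\<lambda>x. TT True p q x 1) $ m"
        using E_even[of m p q] path_parity[where u=u and d=d and T="TT True p q", OF T0 TS, of m 1] by auto
    qed
    have H: "\<And>j. GG c (Suc j) * (1 - fps_const ((qint (j+1) p q)\<^sup>2) * fps_X^2 * GG c (Suc (Suc j))) = 1"
      using GG_inv[of c] by (simp add: c_def u_def d_def power2_eq_square)
    have "(\<lambda>k. cf_conv (\<lambda>i. (qint (i+1) p q)\<^sup>2) k) \<longlonglongrightarrow> GG c (Suc 0)"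
      using cf_conv_lim(1)[of "\<lambda>j. GG c (Suc j)", OF H] by simp
    then show ?thesis using tgt g by simp
  qed
qed


end
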